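(* Let $F:\mathbb{R}^d\to\mathbb{R}^d$ be $L$-Lipschitz, let $x^*$ satisfy $F(x^* )=0$, and suppose $F$ satisfies the weak Minty condition with parameter $0<\rho<\frac1{2L}$. Consider the deterministic past extragradient method: given $x_0$, $\hat x_{-1}=x_0$, and for $k\ge0$, $\hat x_k=x_k-\gamma F(\hat x_{k-1})$, $x_{k+1}=x_k-\omega F(\hat x_k)$, with $$\max\Big\{2\rho,\frac1{2L}\Big\}<\gamma<\frac1L,\qquad 0<\omega<\min\Big\{\gamma-2\rho,\frac1{4L}-\frac\gamma4\Big\}.$$ Then for all $K\ge2$, $$\min_{0\le k\le K-1}\|F(\hat x_k)\|^2\le\frac{C\|x_0-x^*\|^2}{K-1},\qquad C=\frac{48}{\omega\gamma(1-L(\gamma+4\omega))}.$$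
   Context: $L$-Lipschitz: $\|F(x)-F(y)\|\le L\|x-y\|$. Weak Minty condition with parameter $\rho>0$: $\langle F(x),x-x^*\rangle\ge-\rho\|F(x)\|^2$ for all $x$. (This is the deterministic case $\delta=0$, $\sigma_*^2=0$ of stochastic past extragradient.) *)

theory Defs
  imports "HOL-Analysis.Analysis"
begin

text \<open>Deterministic past extragradient. The state at step k is the pair
  (x_k, xhat_{k-1}), with xhat_{-1} = x_0.\<close>
fun pe_state :: "('a::real_vector \<Rightarrow> 'a) \<Rightarrow> real \<Rightarrow> real \<Rightarrow> 'a \<Rightarrow> nat \<Rightarrow> 'a \<times> 'a" where
  "pe_state F \<gamma> \<omega> x0 0 = (x0, x0)"
| "pe_state F \<gamma> \<omega> x0 (Suc k) =
     (let (x, hp) = pe_state F \<gamma> \<omega> x0 k; xh = x - \<gamma> *\<^sub>R F hp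
      in (x - \<omega> *\<^sub>R F xh, xh))"

definition pe_x :: "('a::real_vector \<Rightarrow> 'a) \<Rightarrow> real \<Rightarrow> real \<Rightarrow> 'a \<Rightarrow> nat \<Rightarrow> 'a" where
  "pe_x F \<gamma> \<omega> x0 k = fst (pe_state F \<gamma> \<omega> x0 k)"

definition pe_xhat :: "('a::real_vector \<Rightarrow> 'a) \<Rightarrow> real \<Rightarrow> real \<Rightarrow> 'a \<Rightarrow> nat \<Rightarrow> 'a" where
  "pe_xhat F \<gamma> \<omega> x0 k = snd (pe_state F \<gamma> \<omega> x0 (Suc k))"

lemma pe_xhat_rec:
  "pe_xhat F \<gamma> \<omega> x0 0 = x0 - \<gamma> *\<^sub>R F x0"
  "pe_xhat F \<gamma> \<omega> x0 (Suc k) = pe_x F \<gamma> \<omega> x0 (Suc k) - \<gamma> *\<^sub>R F (pe_xhat F \<gamma> \<omega> x0 k)"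
  "pe_x F \<gamma> \<omega> x0 (Suc k) = pe_x F \<gamma> \<omega> x0 k - \<omega> *\<^sub>R F (pe_xhat F \<gamma> \<omega> x0 k)"
  by (auto simp: pe_xhat_def pe_x_def Let_def split: prod.splits)

end

theory Submission
  imports Defs
begin

lemma norm_sub_scale_sq:
  fixes u v :: "'a::real_inner"
  shows "(norm (u - w *\<^sub>R v))\<^sup>2 = (norm u)\<^sup>2 - 2 * w * inner v u + w\<^sup>2 * (norm v)\<^sup>2"
  unfolding power2_norm_eq_inner
  by (simp add: inner_diff_left inner_diff_right inner_commute
      algebra_simps power2_eq_square)

lemma two_inner_eq:
  fixes a b :: "'a::real_inner"
  shows "2 * inner a b = (norm a)\<^sup>2 + (norm b)\<^sup>2 - (norm (a - b))\<^sup>2"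
  by (simp add: power2_norm_eq_inner inner_diff_left inner_diff_right inner_commute
      algebra_simps)

lemma young_s:
  fixes A B s :: real
  assumes "0 < s" "s < 1"
  shows "(A + B)\<^sup>2 \<le> A\<^sup>2 / (1 - s) + B\<^sup>2 / s"
proof -
  have "s * (1 - s) * (A + B)\<^sup>2 \<le> s * A\<^sup>2 + (1 - s) * B\<^sup>2"
  proof -
    have "0 \<le> (s * A - (1 - s) * B)\<^sup>2" by simp
    then show ?thesis by (simp add: power2_eq_square algebra_simps)
  qed
  moreover have "A\<^sup>2 / (1 - s) + B\<^sup>2 / s = (s * A\<^sup>2 + (1 - s) * B\<^sup>2) / (s * (1 - s))"
    using assms by (simp add: field_simps)
  ultimately show ?thesis using assms
    by (simp add: pos_le_divide_eq mult.commute)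
qed

theorem corollary4p6:
  fixes F :: "real ^ 'd \<Rightarrow> real ^ 'd" and xstar x0 :: "real ^ 'd"
    and L \<rho> \<gamma> \<omega> :: real and K :: nat
  assumes L_pos: "L > 0"
    and lip: "\<And>x y. norm (F x - F y) \<le> L * norm (x - y)"
    and root: "F xstar = 0"
    and rho: "0 < \<rho>" "\<rho> < 1 / (2 * L)"
    and minty: "\<And>x. inner (F x) (x - xstar) \<ge> - \<rho> * (norm (F x))\<^sup>2"
    and gamma: "max (2 * \<rho>) (1 / (2 * L)) < \<gamma>" "\<gamma> < 1 / L"
    and omega: "0 < \<omega>" "\<omega> < min (\<gamma> - 2 * \<rho>) (1 / (4 * L) - \<gamma> / 4)"
    and K: "K \<ge> 2"
  shows "(MIN k\<in>{0..K-1}. (norm (F (pe_xhat F \<gamma> \<omega> x0 k)))\<^sup>2)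
           \<le> (48 / (\<omega> * \<gamma> * (1 - L * (\<gamma> + 4 * \<omega>)))) * (norm (x0 - xstar))\<^sup>2 / real (K - 1)"
proof -
  define s where "s = L * \<gamma>"
  have g1: "2 * \<rho> < \<gamma>" "1 / (2 * L) < \<gamma>" using gamma(1) by auto
  have w1: "\<omega> < \<gamma> - 2 * \<rho>" "\<omega> < 1 / (4 * L) - \<gamma> / 4" using omega(2) by auto
  have gpos: "\<gamma> > 0" using g1 rho by linarith
  have s1: "1 < 2 * s" using g1(2) L_pos by (simp add: s_def field_simps)
  have s2: "s < 1" using gamma(2) L_pos by (simp add: s_def field_simps)
  have spos: "0 < s" using s1 by linarith
  have Lw: "4 * (L * \<omega>) < 1 - s" using w1(2) L_pos by (simp add: s_def field_simps)
  have Lwpos: "0 < L * \<omega>" using L_pos omega(1) by simp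
  define x where "x = pe_x F \<gamma> \<omega> x0"
  define z where "z = case_nat x0 (pe_xhat F \<gamma> \<omega> x0)"
  define h where "h k = F (z k)" for k
  have x0: "x 0 = x0" by (simp add: x_def pe_x_def)
  have xS: "x (Suc k) = x k - \<omega> *\<^sub>R h (Suc k)" for k
    by (simp add: x_def h_def z_def pe_xhat_rec)
  have zS: "z (Suc k) = x k - \<gamma> *\<^sub>R h k" for k
  proof (cases k)
    case 0 then show ?thesis by (simp add: z_def h_def x0 pe_xhat_rec)
  next
    case (Suc j) then show ?thesis by (simp add: z_def h_def x_def pe_xhat_rec)
  qed
  have hx: "h (Suc k) = F (pe_xhat F \<gamma> \<omega> x0 k)" for k by (simp add: h_def z_def)
  define a where "a k = (norm (x k - xstar))\<^sup>2" for k
  define D where "D k = (norm (h (Suc k) - h k))\<^sup>2" for k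
  define P where "P = (L * \<omega>)\<^sup>2 / (1 - s)"
  define c where "c = 8 * \<omega> * \<gamma> / (7 * (1 - s))"
  define \<Phi> where "\<Phi> k = a k + c * D k" for k
  have cpos: "c > 0" using s2 omega gpos by (simp add: c_def)
  have Pnn: "P \<ge> 0" using s2 by (simp add: P_def)
  have LW2: "(L * \<omega>)\<^sup>2 \<le> ((1 - s) / 4)\<^sup>2"
    using Lw Lwpos by (intro power_mono) auto
  have cP: "c * P \<le> \<omega> * \<gamma> / 14"
  proof -
    have "c * P = 8 * \<omega> * \<gamma> * (L * \<omega>)\<^sup>2 / (7 * (1 - s)\<^sup>2)"
      using s2 by (simp add: c_def P_def power2_eq_square field_simps)
    also have "\<dots> \<le> 8 * \<omega> * \<gamma> * ((1 - s) / 4)\<^sup>2 / (7 * (1 - s)\<^sup>2)"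
      using LW2 omega gpos s2 by (intro divide_right_mono mult_left_mono) auto
    also have "\<dots> = \<omega> * \<gamma> / 14"
    proof -
      have nz: "(1 - s)\<^sup>2 \<noteq> 0" using s2 by simp
      have "((1 - s) / 4)\<^sup>2 = (1 - s)\<^sup>2 / 16" by (simp add: power_divide)
      then show ?thesis using nz by (simp add: field_simps)
    qed
    finally show ?thesis .
  qed
  have c1s: "c * (1 - s) = 8 / 7 * \<omega> * \<gamma>" using s2 by (simp add: c_def field_simps)
  have step1: "a (Suc k) \<le> a k - \<omega> * (\<gamma> - 2 * \<rho> - \<omega>) * (norm (h (Suc k)))\<^sup>2
      - \<omega> * \<gamma> * (norm (h k))\<^sup>2 + \<omega> * \<gamma> * D k" for k
  proof -
    define u where "u = x k - xstar"
    define v where "v = h (Suc k)"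
    define I1 where "I1 = inner v (z (Suc k) - xstar)"
    define I2 where "I2 = inner v (h k)"
    have u: "u = (z (Suc k) - xstar) + \<gamma> *\<^sub>R h k" by (simp add: u_def zS)
    have e1: "a (Suc k) = (norm u)\<^sup>2 - 2 * \<omega> * inner v u + \<omega>\<^sup>2 * (norm v)\<^sup>2"
      unfolding a_def xS u_def v_def
      using norm_sub_scale_sq[of "x k - xstar" \<omega> "h (Suc k)"]
      by (simp add: algebra_simps)
    have e2: "inner v u = I1 + \<gamma> * I2" by (simp add: u I1_def I2_def inner_add_right)
    have e3: "2 * I2 = (norm v)\<^sup>2 + (norm (h k))\<^sup>2 - D k"
      by (simp add: I2_def D_def v_def two_inner_eq)
    have m: "I1 \<ge> - \<rho> * (norm v)\<^sup>2" using minty[of "z (Suc k)"] by (simp add: I1_def v_def h_def)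
    have m2: "\<omega> * I1 \<ge> \<omega> * (- \<rho> * (norm v)\<^sup>2)" using m omega(1) by (intro mult_left_mono) auto
    have "a (Suc k) = a k - 2 * (\<omega> * I1) - \<omega> * \<gamma> * (2 * I2) + \<omega>\<^sup>2 * (norm v)\<^sup>2"
    proof -
      have ak: "a k = (norm u)\<^sup>2" by (simp add: a_def u_def)
      show ?thesis unfolding e1 e2 ak by (simp add: algebra_simps)
    qed
    also have "\<dots> = a k - 2 * (\<omega> * I1) - \<omega> * \<gamma> * ((norm v)\<^sup>2 + (norm (h k))\<^sup>2 - D k) + \<omega>\<^sup>2 * (norm v)\<^sup>2"
      by (simp add: e3)
    finally show ?thesis using m2 unfolding v_def
      by (simp add: algebra_simps power2_eq_square)
  qed
  have step2: "D (Suc k) \<le> s * D k + P * (norm (h (Suc k)))\<^sup>2" for k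
  proof -
    define n1 where "n1 = norm (h (Suc k))"
    define d where "d = norm (h (Suc k) - h k)"
    have diff: "z (Suc (Suc k)) - z (Suc k) = - (\<omega> *\<^sub>R h (Suc k) + \<gamma> *\<^sub>R (h (Suc k) - h k))"
      by (simp add: zS xS algebra_simps)
    have nd: "norm (z (Suc (Suc k)) - z (Suc k)) \<le> \<omega> * n1 + \<gamma> * d"
      unfolding diff norm_minus_cancel n1_def d_def
      using norm_triangle_ineq[of "\<omega> *\<^sub>R h (Suc k)" "\<gamma> *\<^sub>R (h (Suc k) - h k)"] omega(1) gpos
      by simp
    have "norm (h (Suc (Suc k)) - h (Suc k)) \<le> L * norm (z (Suc (Suc k)) - z (Suc k))"
      by (simp add: h_def lip)
    also have "\<dots> \<le> L * (\<omega> * n1 + \<gamma> * d)" using nd L_pos by simp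
    finally have "D (Suc k) \<le> (L * (\<omega> * n1 + \<gamma> * d))\<^sup>2"
      unfolding D_def by (intro power_mono) auto
    also have "\<dots> = (L * \<omega> * n1 + s * d)\<^sup>2" by (simp add: s_def algebra_simps)
    also have "\<dots> \<le> (L * \<omega> * n1)\<^sup>2 / (1 - s) + (s * d)\<^sup>2 / s"
      using young_s spos s2 by blast
    also have "\<dots> = P * n1\<^sup>2 + s * D k"
      using spos by (simp add: P_def D_def d_def power2_eq_square field_simps)
    finally show ?thesis by (simp add: n1_def)
  qed
  have step3: "(norm (h (Suc k)))\<^sup>2 \<le> 2 * (norm (h k))\<^sup>2 + 2 * D k" for k
  proof -
    have "norm (h (Suc k)) \<le> norm (h k) + norm (h (Suc k) - h k)"
      by (metis add.commute diff_add_cancel norm_triangle_ineq)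
    then have "(norm (h (Suc k)))\<^sup>2 \<le> (norm (h k) + norm (h (Suc k) - h k))\<^sup>2"
      by (intro power_mono) auto
    also have "\<dots> \<le> 2 * (norm (h k))\<^sup>2 + 2 * D k"
      unfolding D_def
      using sum_squares_ge_zero
      by (smt (verit) power2_sum zero_le_power2 power2_diff)
    finally show ?thesis .
  qed
  have step: "\<Phi> (Suc k) \<le> \<Phi> k - 6 / 7 * \<omega> * \<gamma> * (norm (h k))\<^sup>2" for k
  proof -
    define n0 where "n0 = (norm (h k))\<^sup>2"
    define n1 where "n1 = (norm (h (Suc k)))\<^sup>2"
    have q: "0 \<le> \<omega> * (\<gamma> - 2 * \<rho> - \<omega>) * n1"
      using w1 omega(1) by (simp add: n1_def)
    have a1: "a (Suc k) \<le> a k - \<omega> * \<gamma> * n0 + \<omega> * \<gamma> * D k"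
      using step1[of k] q by (simp add: n0_def n1_def)
    have d1: "c * D (Suc k) \<le> c * s * D k + c * P * n1"
      using mult_left_mono[OF step2[of k], of c] cpos by (simp add: n1_def algebra_simps)
    have d2: "c * P * n1 \<le> c * P * (2 * n0 + 2 * D k)"
      using mult_left_mono[OF step3[of k], of "c * P"] cpos Pnn by (simp add: n0_def n1_def)
    have Dnn: "D k \<ge> 0" "n0 \<ge> 0" by (simp_all add: D_def n0_def)
    have d3: "c * P * (2 * n0) \<le> (\<omega> * \<gamma> * n0) / 7"
      proof -
      have "c * P * (2 * n0) \<le> (\<omega> * \<gamma> / 14) * (2 * n0)" using cP Dnn by (intro mult_right_mono) auto
      also have "\<dots> = (\<omega> * \<gamma> * n0) / 7" by simp
      finally show ?thesis .
    qed
    have d4: "c * P * (2 * D k) \<le> (\<omega> * \<gamma> * D k) / 7"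
      proof -
      have "c * P * (2 * D k) \<le> (\<omega> * \<gamma> / 14) * (2 * D k)" using cP Dnn by (intro mult_right_mono) auto
      also have "\<dots> = (\<omega> * \<gamma> * D k) / 7" by simp
      finally show ?thesis .
    qed
    have d5: "c * D k - c * s * D k = 8 / 7 * (\<omega> * \<gamma> * D k)"
    proof -
      have "c * D k - c * s * D k = (c * (1 - s)) * D k" by (simp add: algebra_simps)
      then show ?thesis using c1s by simp
    qed
    have d2': "c * P * n1 \<le> c * P * (2 * n0) + c * P * (2 * D k)"
      using d2 by (simp add: distrib_left)
    have "a (Suc k) + c * D (Suc k) \<le> a k + c * D k - 6 / 7 * (\<omega> * \<gamma> * n0)"
      using a1 d1 d2' d3 d4 d5 by linarith
    then show ?thesis by (simp add: \<Phi>_def n0_def)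
  qed
  have sumK: "\<Phi> n + 6 / 7 * \<omega> * \<gamma> * (\<Sum>k<n. (norm (h k))\<^sup>2) \<le> \<Phi> 0" for n
  proof (induction n)
    case 0 then show ?case by simp
  next
    case (Suc n) then show ?case using step[of n] by (simp add: algebra_simps)
  qed
  define r where "r = norm (x0 - xstar)"
  have Phi0: "\<Phi> 0 \<le> 9 / 7 * r\<^sup>2"
  proof -
    have h0: "norm (h 0) \<le> L * r"
      using lip[of x0 xstar] by (simp add: h_def z_def root r_def)
    have "norm (h 1 - h 0) \<le> L * norm (z 1 - z 0)" by (simp add: h_def lip)
    also have "z 1 - z 0 = - (\<gamma> *\<^sub>R h 0)"
      using zS[of 0] by (simp add: x0 z_def)
    also have "L * norm (- (\<gamma> *\<^sub>R h 0)) = s * norm (h 0)"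
      using gpos by (simp add: s_def)
    also have "\<dots> \<le> s * (L * r)" using h0 spos by simp
    finally have "D 0 \<le> (s * (L * r))\<^sup>2" unfolding D_def by (intro power_mono) auto
    then have cd: "c * D 0 \<le> c * (s * (L * r))\<^sup>2" using cpos by simp
    have "c * (s * (L * r))\<^sup>2 = 8 / 7 * ((L * \<omega>) / (1 - s)) * s * s\<^sup>2 * r\<^sup>2"
      using s2 by (simp add: c_def s_def power2_eq_square field_simps)
    also have "\<dots> \<le> 8 / 7 * (1 / 4) * 1 * 1 * r\<^sup>2"
    proof -
      have f1: "(L * \<omega>) / (1 - s) \<le> 1 / 4" using Lw s2 by (simp add: field_simps)
      have f0: "s\<^sup>2 \<le> 1" using spos s2 by (intro power_le_one) auto
      have f2: "s * s\<^sup>2 \<le> 1 * 1" using f0 s2 by (simp add: mult_le_one)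
      define Q where "Q = ((L * \<omega>) / (1 - s)) * (s * s\<^sup>2)"
      have "Q \<le> 1 / 4 * (1 * 1)" unfolding Q_def
        using f0 f1 f2 spos s2 Lwpos by (intro mult_mono) auto
      then have ineq: "Q * r\<^sup>2 \<le> 1 / 4 * r\<^sup>2" by (intro mult_right_mono) auto
      have eq: "8 / 7 * ((L * \<omega>) / (1 - s)) * s * s\<^sup>2 * r\<^sup>2 = 8 / 7 * (Q * r\<^sup>2)"
        by (simp only: Q_def mult_ac)
      show ?thesis using eq ineq by linarith
    qed
    finally have "c * D 0 \<le> 2 / 7 * r\<^sup>2" using cd by simp
    then show ?thesis by (simp add: \<Phi>_def a_def x0 r_def)
  qed
  define M where "M = (MIN k\<in>{0..K-1}. (norm (F (pe_xhat F \<gamma> \<omega> x0 k)))\<^sup>2)"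
  have Mle: "M \<le> (norm (h (Suc j)))\<^sup>2" if "j \<in> {..<K-1}" for j
    unfolding M_def hx using that by (intro Min_le) auto
  have "real (K - 1) * M \<le> (\<Sum>j<K-1. (norm (h (Suc j)))\<^sup>2)"
    using sum_bounded_below[of "{..<K-1}" M "\<lambda>j. (norm (h (Suc j)))\<^sup>2"] Mle by simp
  also have "\<dots> \<le> (\<Sum>k<Suc (K-1). (norm (h k))\<^sup>2)"
    unfolding sum.lessThan_Suc_shift[of "\<lambda>k. (norm (h k))\<^sup>2" "K - 1"] by simp
  also have "Suc (K - 1) = K" using K by simp
  finally have sM: "real (K - 1) * M \<le> (\<Sum>k<K. (norm (h k))\<^sup>2)" .
  have PhiK: "\<Phi> K \<ge> 0" using cpos by (simp add: \<Phi>_def a_def D_def)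
  define T where "T = \<omega> * \<gamma> * real (K - 1)"
  have Tpos: "T > 0" using omega gpos K by (simp add: T_def)
  have "6 / 7 * \<omega> * \<gamma> * (real (K - 1) * M) \<le> 6 / 7 * \<omega> * \<gamma> * (\<Sum>k<K. (norm (h k))\<^sup>2)"
    using sM omega gpos by (intro mult_left_mono) auto
  then have TM: "T * M \<le> 3 / 2 * r\<^sup>2"
    using sumK[of K] PhiK Phi0 by (simp add: T_def algebra_simps)
  define m where "m = 1 - L * (\<gamma> + 4 * \<omega>)"
  have m1: "0 < m" "m \<le> 1" using Lw Lwpos spos by (simp_all add: m_def s_def algebra_simps)
  have "M \<le> 3 / 2 * r\<^sup>2 / T" using TM Tpos by (simp add: field_simps)
  also have "\<dots> \<le> 48 * r\<^sup>2 / T" using Tpos by (intro divide_right_mono) auto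
  also have "\<dots> \<le> 48 * r\<^sup>2 / (m * T)"
    using Tpos m1 by (intro divide_left_mono) (auto intro: mult_left_le_one_le)
  also have "\<dots> = (48 / (\<omega> * \<gamma> * m)) * r\<^sup>2 / real (K - 1)"
    by (simp add: T_def field_simps)
  finally show ?thesis by (simp add: M_def m_def r_def)
qed

end
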